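(* Let $\mathbb{F}$ be a finite field, let $n, r, s$ be positive integers, and let $A \in \mathbb{F}^{(r+s)n \times (r+s)n}$ be a totally-non-singular lower-triangular matrix. For $v \in \mathbb{F}^s$ let $v' \in \mathbb{F}^{r+s}$ be obtained by appending $r$ zeros to $v$, and for $x = (x_1,\dots,x_k) \in (\mathbb{F}^s)^k$ let $x' = (x'_1,\dots,x'_k) \in \mathbb{F}^{(r+s)k}$. Define $\mathsf{TC}^{(n)}_{A,(s,r)}\colon (\mathbb{F}^s)^{(\leq n)} \to (\mathbb{F}^{r+s})^{(\leq n)}$ by mapping $x \in (\mathbb{F}^s)^k$ ($k \leq n$) to $A^{((r+s)k)} x' \in \mathbb{F}^{(r+s)k}$, viewed as an element of $(\mathbb{F}^{r+s})^k$ by grouping consecutive blocks of $r+s$ coordinates. Then $\mathsf{TC}^{(n)}_{A,(s,r)}$ is an $n$-truncated MDS tree code with distance $\frac{r}{r+s}$.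
   Context: For an $m \times m$ matrix $A$ and $k \leq m$, $A^{(k)}$ denotes the top-left $k \times k$ submatrix of $A$; for index sets $I,J$, $A[I|J]$ is the submatrix with rows $I$ and columns $J$. A lower-triangular $A \in \mathbb{F}^{m \times m}$ is totally-non-singular if for every $1 \leq t \leq m$ and all $I = \{i_1 < \dots < i_t\}, J = \{j_1 < \dots < j_t\} \subseteq [m]$ with $i_u \geq j_u$ for all $u \in [t]$, the submatrix $A[I|J]$ is non-singular. An $n$-truncated tree code $\mathsf{TC}^{(n)}\colon \Sigma^{(\leq n)} \to \Gamma^{(\leq n)}$ maps each string of length $k \leq n$ over $\Sigma$ to a string of length $k$ over $\Gamma$ such that the $i$-th output symbol depends only on the first $i$ input symbols. For $x \neq x' \in \Sigma^k$, $\operatorname{split}(x,x')$ is the largest $t$ with $x_u = x'_u$ for all $u \leq t$; $\Delta$ is Hamming distance over $\Gamma$. Its distance is $\delta_{\mathsf{TC}^{(n)}} := \inf_{k \leq n,\, x \neq x' \in \Sigma^k} \frac{\Delta(\mathsf{TC}^{(n)}(x),\mathsf{TC}^{(n)}(x'))}{k - \operatorname{split}(x,x')}$. It is maximum-distance separable (MDS) if $\delta_{\mathsf{TC}^{(n)}} > 1 - \frac{\log|\Sigma|}{\log|\Gamma|}$. *)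

theory Defs
  imports Complex_Main "Jordan_Normal_Form.Determinant"
begin

(* Matrices are Jordan_Normal_Form matrices, indices 0-based. *)

definition lower_tri :: "'a::zero mat \<Rightarrow> bool" where
  "lower_tri A \<longleftrightarrow> (\<forall>i<dim_row A. \<forall>j<dim_col A. i < j \<longrightarrow> A $$ (i,j) = 0)"

definition submat :: "'a mat \<Rightarrow> nat set \<Rightarrow> nat set \<Rightarrow> 'a mat" where
  "submat A I J = mat (card I) (card J)
     (\<lambda>(u,v). A $$ (sorted_list_of_set I ! u, sorted_list_of_set J ! v))"

definition totally_non_singular :: "'a::field mat \<Rightarrow> bool" where
  "totally_non_singular A \<longleftrightarrow> lower_tri A \<and>
     (\<forall>t I J. 1 \<le> t \<and> t \<le> dim_row A \<and> I \<subseteq> {0..<dim_row A} \<and> J \<subseteq> {0..<dim_row A}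
        \<and> card I = t \<and> card J = t
        \<and> (\<forall>u<t. sorted_list_of_set I ! u \<ge> sorted_list_of_set J ! u)
        \<longrightarrow> det (submat A I J) \<noteq> 0)"

definition truncated_tree_code ::
  "nat \<Rightarrow> 'a set \<Rightarrow> 'b set \<Rightarrow> ('a list \<Rightarrow> 'b list) \<Rightarrow> bool" where
  "truncated_tree_code n \<Sigma> \<Gamma> TC \<longleftrightarrow>
     (\<forall>x \<in> lists \<Sigma>. length x \<le> n \<longrightarrow> TC x \<in> lists \<Gamma> \<and> length (TC x) = length x) \<and>
     (\<forall>x \<in> lists \<Sigma>. \<forall>y \<in> lists \<Sigma>. length x \<le> n \<longrightarrow> length y \<le> n \<longrightarrow>
        (\<forall>i. i < length x \<longrightarrow> i < length y \<longrightarrow> take (Suc i) x = take (Suc i) y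
              \<longrightarrow> TC x ! i = TC y ! i))"

definition hamming :: "'b list \<Rightarrow> 'b list \<Rightarrow> nat" where
  "hamming x y = card {i. i < length x \<and> i < length y \<and> x ! i \<noteq> y ! i}"

(* largest t with x_u = x'_u for all u \<le> t (1-based), i.e. longest common prefix *)
definition split_idx :: "'a list \<Rightarrow> 'a list \<Rightarrow> nat" where
  "split_idx x y = (GREATEST t. t \<le> length x \<and> take t x = take t y)"

definition tc_distance :: "nat \<Rightarrow> 'a set \<Rightarrow> ('a list \<Rightarrow> 'b list) \<Rightarrow> real" where
  "tc_distance n \<Sigma> TC = Inf ((\<lambda>(x,y). real (hamming (TC x) (TC y)) / real (length x - split_idx x y))
      ` {(x,y). x \<in> lists \<Sigma> \<and> y \<in> lists \<Sigma> \<and> length x \<le> n \<and> length y = length x \<and> x \<noteq> y})"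

definition MDS_tree_code :: "nat \<Rightarrow> 'a set \<Rightarrow> 'b set \<Rightarrow> ('a list \<Rightarrow> 'b list) \<Rightarrow> bool" where
  "MDS_tree_code n \<Sigma> \<Gamma> TC \<longleftrightarrow>
     tc_distance n \<Sigma> TC > 1 - ln (real (card \<Sigma>)) / ln (real (card \<Gamma>))"

(* The code TC_{A,(s,r)}: input symbols are vectors in F^s (lists of length s),
   output symbols vectors in F^(r+s). *)
definition pad_input :: "nat \<Rightarrow> 'a::zero list list \<Rightarrow> 'a list" where
  "pad_input r x = concat (map (\<lambda>v. v @ replicate r 0) x)"

definition TC_A :: "'a::field mat \<Rightarrow> nat \<Rightarrow> nat \<Rightarrow> 'a list list \<Rightarrow> 'a list list" where
  "TC_A A s r x =
     (let k = length x; m = (r+s)*k; x' = pad_input r x;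
          y = (\<lambda>i. \<Sum>j<m. A $$ (i,j) * x' ! j)
      in map (\<lambda>b. map (\<lambda>c. y ((r+s)*b + c)) [0..<r+s]) [0..<k])"

end

theory Submission
  imports Defs
begin


lemma sorted_snoc_set:
  fixes I :: "nat set"
  assumes "finite I" "\<forall>i\<in>I. i < z"
  shows "sorted_list_of_set (insert z I) = sorted_list_of_set I @ [z]"
proof -
  have "sorted_wrt (<) (sorted_list_of_set I @ [z]) \<and> set (sorted_list_of_set I @ [z]) = insert z I
        \<and> length (sorted_list_of_set I @ [z]) = card (insert z I)"
    using assms by (auto simp: sorted_wrt_append)
  then show ?thesis using assms sorted_list_of_set_unique[of "insert z I" "sorted_list_of_set I @ [z]"]
    by auto
qed

lemma hall_select:
  fixes J Z :: "nat set"
  assumes "finite J" "finite Z"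
    and "\<forall>c\<in>J. card {j\<in>J. c \<le> j} \<le> card {z\<in>Z. c \<le> z}"
  shows "\<exists>I\<subseteq>Z. card I = card J \<and> (\<forall>u<card J. sorted_list_of_set J ! u \<le> sorted_list_of_set I ! u)"
  using assms
proof (induction "card J" arbitrary: J Z)
  case 0
  then show ?case by auto
next
  case (Suc p)
  define jm where "jm = Max J"
  have Jne: "J \<noteq> {}" using Suc.hyps(2) by auto
  have jmJ: "jm \<in> J" using Jne Suc.prems jm_def by simp
  have "card {j\<in>J. jm \<le> j} \<ge> 1" using jmJ Suc.prems(1) by (auto simp: card_gt_0_iff Suc_le_eq)
  then have "card {z\<in>Z. jm \<le> z} \<ge> 1" using Suc.prems(3) jmJ by fastforce
  then have Zne: "{z\<in>Z. jm \<le> z} \<noteq> {}" by (metis card.empty not_one_le_zero)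
  define zm where "zm = Max Z"
  have Zne2: "Z \<noteq> {}" using Zne by auto
  have zmZ: "zm \<in> Z" using Zne2 Suc.prems(2) zm_def by simp
  have zmge: "jm \<le> zm" using Zne Suc.prems(2) zm_def using Max_ge order_trans by blast
  define J' where "J' = J - {jm}"
  define Z' where "Z' = Z - {zm}"
  have cJ': "card J' = p" using Suc.hyps(2) jmJ J'_def by simp
  have hall': "\<forall>c\<in>J'. card {j\<in>J'. c \<le> j} \<le> card {z\<in>Z'. c \<le> z}"
  proof
    fix c assume c: "c \<in> J'"
    have cle: "c \<le> jm" using c J'_def jm_def Suc.prems(1) by auto
    have e1: "{j\<in>J'. c \<le> j} = {j\<in>J. c \<le> j} - {jm}" using J'_def by auto
    have e2: "{z\<in>Z'. c \<le> z} = {z\<in>Z. c \<le> z} - {zm}" using Z'_def by auto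
    have "card {j\<in>J'. c \<le> j} = card {j\<in>J. c \<le> j} - 1" unfolding e1
      using jmJ cle Suc.prems(1) by (subst card_Diff_singleton) auto
    also have "\<dots> \<le> card {z\<in>Z. c \<le> z} - 1" using Suc.prems(3) c J'_def by (simp add: diff_le_mono)
    also have "\<dots> = card {z\<in>Z'. c \<le> z}" unfolding e2
      using zmZ cle zmge Suc.prems(2) by (subst card_Diff_singleton) auto
    finally show "card {j\<in>J'. c \<le> j} \<le> card {z\<in>Z'. c \<le> z}" .
  qed
  obtain I' where I': "I' \<subseteq> Z'" "card I' = card J'"
    "\<forall>u<card J'. sorted_list_of_set J' ! u \<le> sorted_list_of_set I' ! u"
    using Suc.hyps(1)[OF cJ'[symmetric] _ _ hall'] Suc.prems J'_def Z'_def by auto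
  have finI': "finite I'" using I'(1) Suc.prems(2) Z'_def finite_subset by auto
  have I'lt: "\<forall>i\<in>I'. i < zm" using I'(1) Z'_def zm_def Suc.prems(2)
    by (metis DiffE Max_ge le_neq_implies_less singletonI subsetD)
  have J'lt: "\<forall>j\<in>J'. j < jm" using J'_def jm_def Suc.prems(1)
    by (metis DiffE Max_ge le_neq_implies_less singletonI)
  have eJ: "J = insert jm J'" using jmJ J'_def by auto
  have sJ: "sorted_list_of_set J = sorted_list_of_set J' @ [jm]"
    unfolding eJ by (rule sorted_snoc_set) (use J'_def Suc.prems(1) J'lt in auto)
  have sI: "sorted_list_of_set (insert zm I') = sorted_list_of_set I' @ [zm]"
    by (rule sorted_snoc_set) (use finI' I'lt in auto)
  have lenJ': "length (sorted_list_of_set J') = p" using cJ' by simp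
  have lenI': "length (sorted_list_of_set I') = p" using cJ' I'(2) by simp
  show ?case
  proof (intro exI[of _ "insert zm I'"] conjI)
    show "insert zm I' \<subseteq> Z" using I'(1) zmZ Z'_def by auto
    show "card (insert zm I') = card J" using I'(2) cJ' Suc.hyps(2) finI' I'lt by auto
    show "\<forall>u<card J. sorted_list_of_set J ! u \<le> sorted_list_of_set (insert zm I') ! u"
    proof (intro allI impI)
      fix u assume u: "u < card J"
      show "sorted_list_of_set J ! u \<le> sorted_list_of_set (insert zm I') ! u"
      proof (cases "u < p")
        case True
        then show ?thesis unfolding sJ sI using I'(3) cJ' lenJ' lenI' by (simp add: nth_append)
      next
        case False
        then have "u = p" using u Suc.hyps(2) by simp
        then show ?thesis unfolding sJ sI using lenJ' lenI' zmge by (simp add: nth_append)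
      qed
    qed
  qed
qed


lemma coord_lemma:
  fixes A :: "'a::field mat" and D :: "nat \<Rightarrow> 'a"
  assumes TNS: "totally_non_singular A" and dim: "A \<in> carrier_mat N0 N0" and MN: "M \<le> N0"
    and supp: "\<forall>j. D j \<noteq> 0 \<longrightarrow> j < M" and ne: "\<exists>j. D j \<noteq> 0"
  shows "\<exists>c. D c \<noteq> 0 \<and> card {i. c \<le> i \<and> i < M \<and> (\<Sum>j<M. A $$ (i,j) * D j) = 0}
                        < card {j. c \<le> j \<and> D j \<noteq> 0}"
proof (rule ccontr)
  assume H: "\<not> ?thesis"
  define J where "J = {j. D j \<noteq> 0}"
  define AD where "AD = (\<lambda>i. \<Sum>j<M. A $$ (i,j) * D j)"
  define Z where "Z = {i. i < M \<and> AD i = 0}"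
  have JM: "J \<subseteq> {..<M}" using supp J_def by auto
  have finJ: "finite J" using JM finite_subset by blast
  have finZ: "finite Z" unfolding Z_def by auto
  have hall: "\<forall>c\<in>J. card {j\<in>J. c \<le> j} \<le> card {z\<in>Z. c \<le> z}"
  proof
    fix c assume "c \<in> J"
    then have "\<not> card {i. c \<le> i \<and> i < M \<and> AD i = 0} < card {j. c \<le> j \<and> D j \<noteq> 0}"
      using H J_def AD_def by auto
    moreover have "{i. c \<le> i \<and> i < M \<and> AD i = 0} = {z\<in>Z. c \<le> z}" unfolding Z_def by auto
    moreover have "{j. c \<le> j \<and> D j \<noteq> 0} = {j\<in>J. c \<le> j}" unfolding J_def by auto
    ultimately show "card {j\<in>J. c \<le> j} \<le> card {z\<in>Z. c \<le> z}" by simp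
  qed
  obtain I where I: "I \<subseteq> Z" "card I = card J"
    "\<forall>u<card J. sorted_list_of_set J ! u \<le> sorted_list_of_set I ! u"
    using hall_select[OF finJ finZ hall] by blast
  define p where "p = card J"
  define sJ where "sJ = sorted_list_of_set J"
  define sI where "sI = sorted_list_of_set I"
  have p1: "1 \<le> p" using ne finJ J_def p_def by (auto simp: Suc_le_eq card_gt_0_iff)
  have pM: "p \<le> M" using JM p_def card_mono[of "{..<M}" J] by auto
  have dimA: "dim_row A = N0" "dim_col A = N0" using dim by auto
  have IN: "I \<subseteq> {0..<N0}" using I(1) Z_def MN by auto
  have JN: "J \<subseteq> {0..<N0}" using JM MN by auto
  have det: "det (submat A I J) \<noteq> 0"
    using TNS unfolding totally_non_singular_def
    using p1 pM MN IN JN I(2,3) p_def dimA by (metis (no_types, lifting) order_trans)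
  have finI: "finite I" using I(1) finZ finite_subset by blast
  have lsJ: "length sJ = p" using sJ_def p_def by simp
  have lsI: "length sI = p" using sI_def p_def I(2) by simp
  have dsJ: "distinct sJ" "set sJ = J" using sJ_def finJ by auto
  have dsI: "set sI = I" using sI_def finI by auto
  have carr: "submat A I J \<in> carrier_mat p p" unfolding submat_def using I(2) p_def by auto
  define v where "v = vec p (\<lambda>u. D (sJ ! u))"
  have vc: "v \<in> carrier_vec p" unfolding v_def by simp
  have vne: "v \<noteq> 0\<^sub>v p"
  proof
    assume "v = 0\<^sub>v p"
    then have "v $ 0 = 0" using p1 by simp
    moreover have "sJ ! 0 \<in> J" using dsJ lsJ p1 nth_mem[of 0 sJ] by simp
    ultimately show False unfolding v_def J_def using p1 by simp
  qed
  have bij: "bij_betw ((!) sJ) {..<p} J" using bij_betw_nth[OF dsJ(1)] lsJ dsJ(2) by simp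
  have prod0: "submat A I J *\<^sub>v v = 0\<^sub>v p"
  proof (rule eq_vecI)
    show "dim_vec (submat A I J *\<^sub>v v) = dim_vec (0\<^sub>v p)" using carr by simp
    fix u assume "u < dim_vec (0\<^sub>v p)"
    then have u: "u < p" by simp
    have "(submat A I J *\<^sub>v v) $ u = (\<Sum>w\<in>{0..<p}. A $$ (sI ! u, sJ ! w) * D (sJ ! w))"
      using u carr unfolding scalar_prod_def v_def
      by (auto simp: submat_def sI_def sJ_def p_def I(2) scalar_prod_def intro!: sum.cong)
    also have "\<dots> = (\<Sum>j\<in>J. A $$ (sI ! u, j) * D j)"
      using sum.reindex_bij_betw[OF bij, of "\<lambda>j. A $$ (sI ! u, j) * D j"]
      by (simp add: atLeast0LessThan)
    also have "\<dots> = AD (sI ! u)" unfolding AD_def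
      by (rule sum.mono_neutral_left) (use JM J_def in auto)
    also have "\<dots> = 0" using I(1) dsI lsI u Z_def by (metis (mono_tags, lifting) mem_Collect_eq nth_mem subsetD)
    finally show "(submat A I J *\<^sub>v v) $ u = 0\<^sub>v p $ u" using u by simp
  qed
  have "det (submat A I J) = 0"
    using det_0_iff_vec_prod_zero_field[OF carr] vc vne prod0 by blast
  then show False using det by simp
qed


lemma inj_blk: "inj_on (\<lambda>(b,e). w*b + e) (UNIV \<times> {..<(w::nat)})"
proof (rule inj_onI, clarsimp)
  fix b e b' e' :: nat assume "e < w" "e' < w" "w*b + e = w*b' + e'"
  then have "(w*b+e) div w = (w*b'+e') div w" "(w*b+e) mod w = (w*b'+e') mod w" by simp_all
  then show "b = b' \<and> e = e'" using \<open>e<w\<close> \<open>e'<w\<close> by simp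
qed

lemma card_blk: "card ((\<lambda>(b,e). w*b + e) ` (B \<times> {..<(e0::nat)})) = card B * e0" if "e0 \<le> w" "finite B"
proof -
  have "inj_on (\<lambda>(b,e). w*b + e) (B \<times> {..<e0})"
    by (rule inj_on_subset[OF inj_blk[of w]]) (use that in auto)
  then show ?thesis by (simp add: card_image card_cartesian_product)
qed

lemma blk_lt: "b < k \<Longrightarrow> e < w \<Longrightarrow> w*b+e < w*(k::nat)"
proof -
  assume a: "b < k" "e < w"
  have "w*b+e < w*(Suc b)" using a by simp
  also have "\<dots> \<le> w*k" using a by (intro mult_le_mono2) simp
  finally show ?thesis .
qed

lemma block_lemma:
  fixes A :: "'a::field mat" and D :: "nat \<Rightarrow> 'a"
  assumes TNS: "totally_non_singular A" and dim: "A \<in> carrier_mat (w*n) (w*n)"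
    and w: "w = r + s" and s: "s > 0"
  shows "k \<le> n \<Longrightarrow> t < k \<Longrightarrow> (\<forall>j. D j \<noteq> 0 \<longrightarrow> w*t \<le> j \<and> j < w*k \<and> j mod w < s)
    \<Longrightarrow> (\<exists>j. D j \<noteq> 0 \<and> j < w*(Suc t))
    \<Longrightarrow> r*(k-t) < w * card {b. t \<le> b \<and> b < k \<and> (\<exists>e<w. (\<Sum>j<w*k. A $$ (w*b+e, j) * D j) \<noteq> 0)}"
proof (induction k arbitrary: t D rule: less_induct)
  case (less k)
  have LT: "\<And>i j. i < w*n \<Longrightarrow> j < w*n \<Longrightarrow> i < j \<Longrightarrow> A $$ (i,j) = 0"
    using TNS dim unfolding totally_non_singular_def lower_tri_def by auto
  define M where "M = w*k"
  have MN: "M \<le> w*n" using less.prems(1) M_def by simp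
  define AD where "AD = (\<lambda>i. \<Sum>j<M. A $$ (i,j) * D j)"
  define nz where "nz = (\<lambda>b. \<exists>e<w. AD (w*b+e) \<noteq> 0)"
  have goal_eq: "{b. t \<le> b \<and> b < k \<and> (\<exists>e<w. (\<Sum>j<w*k. A $$ (w*b+e, j) * D j) \<noteq> 0)}
      = {b. t \<le> b \<and> b < k \<and> nz b}" unfolding nz_def AD_def M_def by simp
  have supp: "\<forall>j. D j \<noteq> 0 \<longrightarrow> j < M" using less.prems(3) M_def by auto
  have ne: "\<exists>j. D j \<noteq> 0" using less.prems(4) by auto
  obtain c where c: "D c \<noteq> 0" and cardc: "card {i. c \<le> i \<and> i < M \<and> AD i = 0} < card {j. c \<le> j \<and> D j \<noteq> 0}"
    using coord_lemma[OF TNS dim MN supp ne] AD_def by blast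
  define \<beta> where "\<beta> = c div w"
  define oo where "oo = c mod w"
  have wpos: "w > 0" using w s by simp
  have os: "oo < s" using less.prems(3) c oo_def by auto
  have c_eq: "c = w*\<beta> + oo" using \<beta>_def oo_def by simp
  have tb: "t \<le> \<beta>" using less.prems(3) c \<beta>_def wpos
    by (metis div_le_mono nonzero_mult_div_cancel_left not_gr0 not_less0)
  have bk: "\<beta> < k" using less.prems(3) c \<beta>_def wpos
    by (metis div_less_iff_less_mult mult.commute)
  define g where "g = (\<lambda>(b::nat,e::nat). w*b + e)"
  define B0 where "B0 = {b. \<beta> \<le> b \<and> b < k \<and> \<not> nz b}"
  define H' where "H' = {b. \<beta> \<le> b \<and> b < k \<and> nz b}"
  have finB0: "finite B0" "finite H'" unfolding B0_def H'_def by auto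
  have part: "card H' + card B0 = k - \<beta>"
  proof -
    have "H' \<union> B0 = {\<beta>..<k}" "H' \<inter> B0 = {}" unfolding H'_def B0_def by auto
    then show ?thesis using card_Un_disjoint[OF finB0(2) finB0(1)] by simp
  qed
  have Jsub: "{j. c \<le> j \<and> D j \<noteq> 0} \<subseteq> g ` ({\<beta>..<k} \<times> {..<s}) - {w*\<beta>..<c}"
  proof
    fix j assume j: "j \<in> {j. c \<le> j \<and> D j \<noteq> 0}"
    then have j1: "c \<le> j" "j < w*k" "j mod w < s" using less.prems(3) by auto
    have "\<beta> \<le> j div w" using j1(1) \<beta>_def by (simp add: div_le_mono)
    moreover have "j div w < k" using j1(2) by (simp add: div_less_iff_less_mult mult.commute wpos)
    moreover have "j = g (j div w, j mod w)" unfolding g_def by simp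
    ultimately show "j \<in> g ` ({\<beta>..<k} \<times> {..<s}) - {w*\<beta>..<c}" using j1 by force
  qed
  have Osub: "{w*\<beta>..<c} \<subseteq> g ` ({\<beta>..<k} \<times> {..<s})"
  proof
    fix j assume j: "j \<in> {w*\<beta>..<c}"
    then have "j = g (\<beta>, j - w*\<beta>)" "j - w*\<beta> < s" using c_eq os unfolding g_def by auto
    then show "j \<in> g ` ({\<beta>..<k} \<times> {..<s})" using bk by force
  qed
  have sw: "s \<le> w" using w by simp
  have cardJ: "card {j. c \<le> j \<and> D j \<noteq> 0} \<le> (k-\<beta>)*s - oo"
  proof -
    have "card {j. c \<le> j \<and> D j \<noteq> 0} \<le> card (g ` ({\<beta>..<k} \<times> {..<s}) - {w*\<beta>..<c})"
      by (rule card_mono[OF _ Jsub]) auto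
    also have "\<dots> = card (g ` ({\<beta>..<k} \<times> {..<s})) - card {w*\<beta>..<c}"
      by (rule card_Diff_subset[OF _ Osub]) auto
    also have "\<dots> = (k-\<beta>)*s - oo" unfolding g_def using card_blk[OF sw, of "{\<beta>..<k}"] c_eq by simp
    finally show ?thesis .
  qed
  have Zsup: "g ` (B0 \<times> {..<w}) - {w*\<beta>..<c} \<subseteq> {i. c \<le> i \<and> i < M \<and> AD i = 0}"
  proof
    fix i assume i: "i \<in> g ` (B0 \<times> {..<w}) - {w*\<beta>..<c}"
    then obtain b e where be: "b \<in> B0" "e < w" "i = w*b+e" unfolding g_def by auto
    have "w*\<beta> \<le> w*b" using be(1) B0_def by simp
    then have wb: "w*\<beta> \<le> i" using be(3) by linarith
    have "i \<notin> {w*\<beta>..<c}" using i by blast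
    then have "c \<le> i" using wb by auto
    moreover have "i < M" using be B0_def M_def blk_lt[of b k e w] by simp
    moreover have "AD i = 0" using be B0_def nz_def by auto
    ultimately show "i \<in> {i. c \<le> i \<and> i < M \<and> AD i = 0}" by simp
  qed
  have cardZ: "w * card B0 - oo \<le> card {i. c \<le> i \<and> i < M \<and> AD i = 0}"
  proof -
    have "w * card B0 - oo = card (g ` (B0 \<times> {..<w})) - card {w*\<beta>..<c}"
      unfolding g_def using card_blk[of w w B0] finB0 c_eq by (simp add: mult.commute)
    also have "\<dots> \<le> card (g ` (B0 \<times> {..<w}) - {w*\<beta>..<c})" by (rule diff_card_le_card_Diff) auto
    also have "\<dots> \<le> card {i. c \<le> i \<and> i < M \<and> AD i = 0}" by (rule card_mono[OF _ Zsup]) (simp add: M_def)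
    finally show ?thesis .
  qed
  have kb1: "1 \<le> k - \<beta>" using bk by simp
  have "s \<le> (k-\<beta>)*s" using kb1 by simp
  then have "w * card B0 < (k-\<beta>)*s" using cardZ cardJ cardc os by linarith
  then have suffix: "r*(k-\<beta>) < w * card H'"
  proof -
    assume a: "w * card B0 < (k-\<beta>)*s"
    have "w*(k-\<beta>) = w * card H' + w * card B0" using part by (metis add_mult_distrib2)
    moreover have "w*(k-\<beta>) = r*(k-\<beta>) + s*(k-\<beta>)" using w by (simp add: add_mult_distrib)
    ultimately show ?thesis using a by (simp add: mult.commute)
  qed
  show ?case
  proof (cases "\<beta> = t")
    case True
    then show ?thesis using suffix goal_eq H'_def by simp
  next
    case False
    then have tb': "t < \<beta>" using tb by simp
    define D' where "D' = (\<lambda>j. if j < w*\<beta> then D j else 0)"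
    have IH: "r*(\<beta>-t) < w * card {b. t \<le> b \<and> b < \<beta> \<and> (\<exists>e<w. (\<Sum>j<w*\<beta>. A $$ (w*b+e, j) * D' j) \<noteq> 0)}"
    proof (rule less.IH[OF bk])
      show "\<beta> \<le> n" using bk less.prems(1) by simp
      show "t < \<beta>" by fact
      show "\<forall>j. D' j \<noteq> 0 \<longrightarrow> w * t \<le> j \<and> j < w * \<beta> \<and> j mod w < s"
        using less.prems(3) D'_def by auto
      obtain j where j: "D j \<noteq> 0" "j < w * Suc t" using less.prems(4) by blast
      have "w * Suc t \<le> w * \<beta>" using tb' by (intro mult_le_mono2) simp
      then show "\<exists>j. D' j \<noteq> 0 \<and> j < w * Suc t" using j D'_def by (intro exI[of _ j]) auto
    qed
    have same: "(\<Sum>j<w*\<beta>. A $$ (w*b+e, j) * D' j) = AD (w*b+e)" if "b < \<beta>" "e < w" for b e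
    proof -
      define i where "i = w*b+e"
      have ib: "i < w*\<beta>" using that i_def blk_lt by simp
      have kn: "w*\<beta> \<le> w*k" "w*k \<le> w*n" using bk less.prems(1) by simp_all
      have "AD i = (\<Sum>j<w*k. A $$ (i, j) * D' j)" unfolding AD_def M_def
      proof (rule sum.cong[OF refl])
        fix j assume "j \<in> {..<w*k}"
        then show "A $$ (i, j) * D j = A $$ (i, j) * D' j" using LT[of i j] ib kn D'_def by auto
      qed
      also have "\<dots> = (\<Sum>j<w*\<beta>. A $$ (i, j) * D' j)"
        by (rule sum.mono_neutral_right) (use kn D'_def in auto)
      finally show ?thesis using i_def by simp
    qed
    have H''eq: "{b. t \<le> b \<and> b < \<beta> \<and> (\<exists>e<w. (\<Sum>j<w*\<beta>. A $$ (w*b+e, j) * D' j) \<noteq> 0)}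
        = {b. t \<le> b \<and> b < \<beta> \<and> nz b}" using same unfolding nz_def by auto
    have split: "{b. t \<le> b \<and> b < k \<and> nz b} = {b. t \<le> b \<and> b < \<beta> \<and> nz b} \<union> H'"
      "{b. t \<le> b \<and> b < \<beta> \<and> nz b} \<inter> H' = {}" unfolding H'_def using tb bk by auto
    have cs: "card {b. t \<le> b \<and> b < k \<and> nz b} = card {b. t \<le> b \<and> b < \<beta> \<and> nz b} + card H'"
      unfolding split(1) by (rule card_Un_disjoint) (use split(2) finB0 in auto)
    have "r*(k-t) = r*(\<beta>-t) + r*(k-\<beta>)" using tb bk by (simp add: diff_mult_distrib2)
    then show ?thesis unfolding goal_eq cs using IH H''eq suffix by (simp add: add_mult_distrib2)
  qed
qed


definition Yv :: "'a::field mat \<Rightarrow> nat \<Rightarrow> nat \<Rightarrow> 'a list list \<Rightarrow> nat \<Rightarrow> 'a" where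
  "Yv A s r x i = (\<Sum>j<(r+s)*length x. A $$ (i,j) * pad_input r x ! j)"

lemma TC_len: "length (TC_A A s r x) = length x"
  unfolding TC_A_def Let_def by simp

lemma TC_nth: "b < length x \<Longrightarrow> TC_A A s r x ! b = map (\<lambda>c. Yv A s r x ((r+s)*b+c)) [0..<r+s]"
  unfolding TC_A_def Let_def Yv_def by simp

lemma pad_nth:
  assumes "\<forall>v\<in>set x. length v = s" "j < (r+s)*length x"
  shows "pad_input r x ! j = (if j mod (r+s) < s then x ! (j div (r+s)) ! (j mod (r+s)) else 0)"
  using assms
proof (induction x arbitrary: j)
  case Nil
  then show ?case by simp
next
  case (Cons v x)
  have lv: "length v = s" using Cons.prems by simp
  have pe: "pad_input r (v#x) = (v @ replicate r 0) @ pad_input r x" unfolding pad_input_def by simp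
  show ?case
  proof (cases "j < r+s")
    case True
    then show ?thesis unfolding pe using lv by (auto simp: nth_append)
  next
    case False
    have rs: "r+s > 0" by (rule ccontr) (use Cons.prems(2) in simp)
    define j' where "j' = j - (r+s)"
    have j': "j' < (r+s)*length x" using Cons.prems(2) False j'_def by auto
    have jj: "j = j' + (r+s)" using False j'_def by simp
    have IH: "pad_input r x ! j' = (if j' mod (r+s) < s then x ! (j' div (r+s)) ! (j' mod (r+s)) else 0)"
      using Cons.IH[OF _ j'] Cons.prems by simp
    have "pad_input r (v#x) ! j = pad_input r x ! j'" unfolding pe using lv False j'_def nth_append[of "v @ replicate r 0" "pad_input r x" j] by (simp add: add.commute)
    moreover have "j mod (r+s) = j' mod (r+s)" "j div (r+s) = Suc (j' div (r+s))" unfolding jj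
      using rs by simp_all
    ultimately show ?thesis using IH by simp
  qed
qed

lemma pad_len: "\<forall>v\<in>set x. length v = s \<Longrightarrow> length (pad_input r x) = (r+s)*length x"
  unfolding pad_input_def by (induction x) (auto simp: length_concat)


lemma Yv_local:
  fixes A :: "'a::field mat"
  assumes TNS: "totally_non_singular A" and dim: "A \<in> carrier_mat ((r+s)*n) ((r+s)*n)"
    and xs: "\<forall>v\<in>set x. length v = s" and kn: "length x \<le> n" and i: "i < length x" and e: "e < r+s"
  shows "Yv A s r x ((r+s)*i+e) = (\<Sum>j<(r+s)*Suc i. A $$ ((r+s)*i+e, j) *
            (if j mod (r+s) < s then x ! (j div (r+s)) ! (j mod (r+s)) else 0))"
proof -
  define w where "w = r+s"
  define k where "k = length x"
  define row where "row = w*i+e"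
  have LT: "\<And>i j. i < w*n \<Longrightarrow> j < w*n \<Longrightarrow> i < j \<Longrightarrow> A $$ (i,j) = 0"
    using TNS dim unfolding totally_non_singular_def lower_tri_def w_def by auto
  have rowlt: "row < w * Suc i" using e row_def w_def by simp
  have ik: "w * Suc i \<le> w*k" using i k_def by (intro mult_le_mono2) simp
  have kn': "w*k \<le> w*n" using kn k_def by simp
  have "Yv A s r x row = (\<Sum>j<w*k. A $$ (row,j) * pad_input r x ! j)" unfolding Yv_def w_def k_def by simp
  also have "\<dots> = (\<Sum>j<w*Suc i. A $$ (row,j) * pad_input r x ! j)"
  proof (rule sum.mono_neutral_right)
    show "\<forall>j\<in>{..<w*k} - {..<w*Suc i}. A $$ (row,j) * pad_input r x ! j = 0"
    proof
      fix j assume j: "j \<in> {..<w*k} - {..<w*Suc i}"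
      then have "j < w*k" "w*Suc i \<le> j" by auto
      then have "j < w*n" "row < j" using kn' rowlt by linarith+
      then show "A $$ (row,j) * pad_input r x ! j = 0" using LT[of row j] by simp
    qed
  qed (use ik in auto)
  also have "\<dots> = (\<Sum>j<w*Suc i. A $$ (row, j) *
            (if j mod w < s then x ! (j div w) ! (j mod w) else 0))"
    by (rule sum.cong[OF refl]) (use pad_nth[OF xs, of _ r] ik k_def w_def in auto)
  finally show ?thesis unfolding row_def w_def .
qed

lemma tree_part:
  fixes A :: "'a::field mat"
  assumes TNS: "totally_non_singular A" and dim: "A \<in> carrier_mat ((r+s)*n) ((r+s)*n)"
  shows "truncated_tree_code n {v. length v = s} {w. length w = r+s} (TC_A A s r)"
  unfolding truncated_tree_code_def
proof (intro conjI ballI impI allI)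
  fix x :: "'a list list" assume "x \<in> lists {v. length v = s}" "length x \<le> n"
  show "TC_A A s r x \<in> lists {w. length w = r + s}"
    by (auto simp: in_set_conv_nth TC_len TC_nth)
  show "length (TC_A A s r x) = length x" by (rule TC_len)
next
  fix x y :: "'a list list" and i
  assume x: "x \<in> lists {v. length v = s}" and y: "y \<in> lists {v. length v = s}"
    and xn: "length x \<le> n" and yn: "length y \<le> n" and ix: "i < length x" and iy: "i < length y"
    and tk: "take (Suc i) x = take (Suc i) y"
  have xs: "\<forall>v\<in>set x. length v = s" using x by auto
  have ys: "\<forall>v\<in>set y. length v = s" using y by auto
  have eqb: "\<And>b. b \<le> i \<Longrightarrow> x ! b = y ! b"
  proof -
    fix b assume "b \<le> i"
    then have "take (Suc i) x ! b = x ! b" "take (Suc i) y ! b = y ! b" by simp_all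
    then show "x ! b = y ! b" using tk by simp
  qed
  show "TC_A A s r x ! i = TC_A A s r y ! i"
    unfolding TC_nth[OF ix] TC_nth[OF iy]
  proof (rule map_cong[OF refl])
    fix e assume "e \<in> set [0..<r+s]"
    then have e: "e < r+s" by simp
    show "Yv A s r x ((r+s)*i+e) = Yv A s r y ((r+s)*i+e)"
      unfolding Yv_local[OF TNS dim xs xn ix e] Yv_local[OF TNS dim ys yn iy e]
    proof (rule sum.cong[OF refl])
      fix j assume "j \<in> {..<(r+s)*Suc i}"
      then have "j < Suc i * (r+s)" by (simp add: mult.commute)
      then have "j div (r+s) < Suc i" by (rule less_mult_imp_div_less)
      then have "j div (r+s) \<le> i" by simp
      then show "A $$ ((r+s)*i+e, j) * (if j mod (r+s) < s then x ! (j div (r+s)) ! (j mod (r+s)) else 0)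
         = A $$ ((r+s)*i+e, j) * (if j mod (r+s) < s then y ! (j div (r+s)) ! (j mod (r+s)) else 0)"
        using eqb by simp
    qed
  qed
qed


lemma pair_bound:
  fixes A :: "'a::field mat"
  assumes TNS: "totally_non_singular A" and dim: "A \<in> carrier_mat ((r+s)*n) ((r+s)*n)"
    and s: "s > 0"
    and x: "x \<in> lists {v. length v = s}" and y: "y \<in> lists {v. length v = s}"
    and kn: "length x \<le> n" and ly: "length y = length x" and xy: "x \<noteq> y"
  shows "real r / real (r+s) < real (hamming (TC_A A s r x) (TC_A A s r y)) / real (length x - split_idx x y)"
proof -
  define w where "w = r+s"
  define k where "k = length x"
  have wpos: "w > 0" using s w_def by simp
  have xs: "\<forall>v\<in>set x. length v = s" using x by auto
  have ys: "\<forall>v\<in>set y. length v = s" using y by auto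
  have ex: "\<exists>i. i<k \<and> x!i \<noteq> y!i"
  proof (rule ccontr)
    assume "\<not> ?thesis"
    then have "x = y" using ly k_def by (intro nth_equalityI) auto
    then show False using xy by simp
  qed
  define t0 where "t0 = (LEAST i. i<k \<and> x!i \<noteq> y!i)"
  have t0: "t0 < k" "x!t0 \<noteq> y!t0" using LeastI_ex[OF ex] t0_def by auto
  have before: "x!b = y!b" if "b < t0" for b
  proof -
    have "\<not> (b<k \<and> x!b \<noteq> y!b)" using not_less_Least[of b] that t0_def by blast
    then show ?thesis using that t0(1) by simp
  qed
  have tk0: "take t0 x = take t0 y"
    by (rule nth_equalityI) (use ly k_def t0 before in auto)
  have split: "split_idx x y = t0"
    unfolding split_idx_def
  proof (rule Greatest_equality)
    show "t0 \<le> length x \<and> take t0 x = take t0 y" using t0 tk0 k_def by simp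
    fix t assume a: "t \<le> length x \<and> take t x = take t y"
    show "t \<le> t0"
    proof (rule ccontr)
      assume "\<not> t \<le> t0"
      then have "take t x ! t0 = x ! t0" "take t y ! t0 = y ! t0" by simp_all
      then show False using a t0 by simp
    qed
  qed
  define px where "px = pad_input r x"
  define py where "py = pad_input r y"
  define D where "D = (\<lambda>j. if j < w*k then px ! j - py ! j else 0)"
  have pxn: "\<And>j. j < w*k \<Longrightarrow> px ! j = (if j mod w < s then x ! (j div w) ! (j mod w) else 0)"
    using pad_nth[OF xs] px_def w_def k_def by simp
  have pyn: "\<And>j. j < w*k \<Longrightarrow> py ! j = (if j mod w < s then y ! (j div w) ! (j mod w) else 0)"
    using pad_nth[OF ys] py_def w_def k_def ly by simp
  have c3: "\<forall>j. D j \<noteq> 0 \<longrightarrow> w*t0 \<le> j \<and> j < w*k \<and> j mod w < s"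
  proof (intro allI impI)
    fix j assume Dj: "D j \<noteq> 0"
    then have jk: "j < w*k" using D_def by (auto split: if_splits)
    have "j mod w < s" using Dj jk pxn pyn D_def by (auto split: if_splits)
    moreover have "w*t0 \<le> j"
    proof (rule ccontr)
      assume "\<not> w*t0 \<le> j"
      then have "j < t0 * w" by (simp add: mult.commute)
      then have "j div w < t0" by (rule less_mult_imp_div_less)
      then have "x ! (j div w) = y ! (j div w)" by (rule before)
      then have "px ! j = py ! j" using pxn[OF jk] pyn[OF jk] by simp
      then show False using Dj jk D_def by simp
    qed
    ultimately show "w*t0 \<le> j \<and> j < w*k \<and> j mod w < s" using jk by simp
  qed
  have lx: "length (x!t0) = s" "length (y!t0) = s" using xs ys t0 k_def ly by auto
  have "\<exists>e. e < s \<and> x!t0!e \<noteq> y!t0!e"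
  proof (rule ccontr)
    assume "\<not> ?thesis"
    then have "x!t0 = y!t0" using lx by (intro nth_equalityI) auto
    then show False using t0(2) by simp
  qed
  then obtain e where e: "e < s" "x!t0!e \<noteq> y!t0!e" by blast
  have c4: "\<exists>j. D j \<noteq> 0 \<and> j < w*Suc t0"
  proof (intro exI conjI)
    have ew: "e < w" using e w_def by simp
    have "w*t0 + e < w*Suc t0" using ew by simp
    also have "\<dots> \<le> w*k" using t0 by (intro mult_le_mono2) simp
    finally have jk: "w*t0 + e < w*k" .
    have "(w*t0+e) mod w = e" "(w*t0+e) div w = t0" using ew by simp_all
    then show "D (w*t0+e) \<noteq> 0" using jk pxn pyn D_def e by simp
    show "w*t0+e < w*Suc t0" using ew by simp
  qed
  have bl: "r*(k-t0) < w * card {b. t0 \<le> b \<and> b < k \<and> (\<exists>e<w. (\<Sum>j<w*k. A $$ (w*b+e, j) * D j) \<noteq> 0)}"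
  proof (rule block_lemma[OF TNS _ w_def s])
    show "A \<in> carrier_mat (w*n) (w*n)" using dim w_def by simp
    show "k \<le> n" using kn k_def by simp
  qed (use t0(1) c3 c4 in auto)
  have sub: "{b. t0 \<le> b \<and> b < k \<and> (\<exists>e<w. (\<Sum>j<w*k. A $$ (w*b+e, j) * D j) \<noteq> 0)}
      \<subseteq> {i. i < length (TC_A A s r x) \<and> i < length (TC_A A s r y) \<and> TC_A A s r x ! i \<noteq> TC_A A s r y ! i}"
  proof
    fix b assume "b \<in> {b. t0 \<le> b \<and> b < k \<and> (\<exists>e<w. (\<Sum>j<w*k. A $$ (w*b+e, j) * D j) \<noteq> 0)}"
    then obtain e where b: "b < k" and e: "e < w" and nz: "(\<Sum>j<w*k. A $$ (w*b+e, j) * D j) \<noteq> 0" by auto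
    have "(\<Sum>j<w*k. A $$ (w*b+e, j) * D j) = Yv A s r x (w*b+e) - Yv A s r y (w*b+e)"
      unfolding Yv_def w_def[symmetric] k_def[symmetric] ly px_def[symmetric] py_def[symmetric]
      by (simp add: sum_subtractf[symmetric] right_diff_distrib D_def k_def)
    then have "Yv A s r x (w*b+e) \<noteq> Yv A s r y (w*b+e)" using nz by simp
    then have "TC_A A s r x ! b ! e \<noteq> TC_A A s r y ! b ! e"
      using TC_nth[of b x A s r] TC_nth[of b y A s r] b e k_def ly w_def by simp
    then show "b \<in> {i. i < length (TC_A A s r x) \<and> i < length (TC_A A s r y) \<and> TC_A A s r x ! i \<noteq> TC_A A s r y ! i}"
      using b TC_len k_def ly by (metis (mono_tags, lifting) mem_Collect_eq)
  qed
  define h where "h = hamming (TC_A A s r x) (TC_A A s r y)"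
  have "card {b. t0 \<le> b \<and> b < k \<and> (\<exists>e<w. (\<Sum>j<w*k. A $$ (w*b+e, j) * D j) \<noteq> 0)} \<le> h"
    unfolding h_def hamming_def by (rule card_mono[OF _ sub]) auto
  then have "w * card {b. t0 \<le> b \<and> b < k \<and> (\<exists>e<w. (\<Sum>j<w*k. A $$ (w*b+e, j) * D j) \<noteq> 0)} \<le> w*h"
    by (rule mult_le_mono2)
  then have "r*(k-t0) < w*h" using bl by linarith
  then have "real r * real (k-t0) < real w * real h" by (metis of_nat_less_iff of_nat_mult)
  moreover have "real (k - t0) > 0" "real w > 0" using t0 wpos by auto
  ultimately have "real r / real w < real h / real (k-t0)"
    by (simp add: divide_less_eq less_divide_eq mult.commute)
  then show ?thesis unfolding split h_def w_def k_def .
qed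

theorem theorem2p6:
  fixes A :: "'a::{field,finite} mat" and n r s :: nat
  assumes "n > 0" and "r > 0" and "s > 0"
    and "A \<in> carrier_mat ((r+s)*n) ((r+s)*n)"
    and "totally_non_singular A"
  shows "truncated_tree_code n {v. length v = s} {w. length w = r+s} (TC_A A s r)
       \<and> MDS_tree_code n {v. length v = s} {w. length w = r+s} (TC_A A s r)
       \<and> tc_distance n {v. length v = s} (TC_A A s r) > real r / real (r+s)"
proof -
  define \<Sigma> where "\<Sigma> = {v::'a list. length v = s}"
  have T: "truncated_tree_code n {v. length v = s} {w. length w = r+s} (TC_A A s r)"
    by (rule tree_part[OF assms(5,4)])
  define X where "X = {(x,y). x \<in> lists \<Sigma> \<and> y \<in> lists \<Sigma> \<and> length x \<le> n \<and> length y = length x \<and> x \<noteq> y}"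
  have SigE: "\<And>m. {v::'a list. length v = m} = {xs. set xs \<subseteq> UNIV \<and> length xs = m}" by simp
  have finS: "finite \<Sigma>" unfolding \<Sigma>_def SigE by (rule finite_lists_length_eq) simp
  define S where "S = {xs. set xs \<subseteq> \<Sigma> \<and> length xs \<le> n}"
  have finSS: "finite S" unfolding S_def by (rule finite_lists_length_le[OF finS])
  have "X \<subseteq> S \<times> S" unfolding X_def S_def by auto
  then have finX: "finite X" using finSS finite_subset by blast
  have r01: "replicate s (0::'a) \<noteq> replicate s 1"
  proof
    assume "replicate s (0::'a) = replicate s 1"
    then have "replicate s (0::'a) ! 0 = replicate s 1 ! 0" by simp
    then show False using assms(3) by simp
  qed
  have "([replicate s 0], [replicate s 1]) \<in> X" unfolding X_def \<Sigma>_def using assms(1) r01 by auto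
  then have neX: "X \<noteq> {}" by auto
  define f where "f = (\<lambda>(x,y). real (hamming (TC_A A s r x) (TC_A A s r y)) / real (length x - split_idx x y))"
  have D: "tc_distance n \<Sigma> (TC_A A s r) > real r / real (r+s)"
  proof -
    have "tc_distance n \<Sigma> (TC_A A s r) = Inf (f ` X)" unfolding tc_distance_def f_def X_def by simp
    moreover have "real r / real (r+s) < Inf (f ` X)"
    proof (subst finite_less_Inf_iff)
      show "finite (f ` X)" using finX by simp
      show "f ` X \<noteq> {}" using neX by simp
      show "\<forall>z\<in>f ` X. real r / real (r + s) < z"
      proof
        fix z assume "z \<in> f ` X"
        then obtain x y where xy: "(x,y) \<in> X" "z = f (x,y)" by auto
        then show "real r / real (r + s) < z" unfolding f_def X_def \<Sigma>_def
          using pair_bound[OF assms(5,4,3)] by auto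
      qed
    qed
    ultimately show ?thesis by simp
  qed
  have MDS: "MDS_tree_code n {v. length v = s} {w. length w = r+s} (TC_A A s r)"
  proof -
    define q where "q = card (UNIV::'a set)"
    have "card {0::'a, 1} \<le> q" unfolding q_def by (rule card_mono) auto
    then have q2: "q \<ge> 2" by simp
    have c1: "card {v::'a list. length v = s} = q^s" unfolding SigE q_def
      by (subst card_lists_length_eq) simp_all
    have c2: "card {v::'a list. length v = r+s} = q^(r+s)" unfolding SigE q_def
      by (subst card_lists_length_eq) simp_all
    have lq: "ln (real q) > 0" using q2 by simp
    have "ln (real (card {v::'a list. length v = s})) / ln (real (card {v::'a list. length v = r+s}))
        = real s / real (r+s)" unfolding c1 c2 of_nat_power ln_realpow using lq by simp
    moreover have "1 - real s / real (r+s) = real r / real (r+s)" using assms(3) by (simp add: field_simps)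
    ultimately show ?thesis unfolding MDS_tree_code_def using D \<Sigma>_def by simp
  qed
  show ?thesis using T MDS D \<Sigma>_def by simp
qed

end
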